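(* Let $\mu\in\mathcal M_{a,b,KN^{-1}}(\mathbb T^N)$ be a probability measure and $B(k)$ as defined below. For every $k\in[1,N]$, distinct indices $i_1,\dots,i_k\in[1,N]$, $j\in[1,k-1]$, points $x_{i_1},\dots,x_{i_{k-1}},x'_{i_j}\in\mathbb T$, and $\psi:\mathbb T\to\mathbb R$ with $\mathrm{Osc}\,\psi<\infty$, $$\int_{\mathbb T}\psi\,d\Pi_{i_k}\big[\mu_{(x_{i_1},\dots,x_{i_j},\dots,x_{i_{k-1}})}-\mu_{(x_{i_1},\dots,x'_{i_j},\dots,x_{i_{k-1}})}\big]\le B(N-1)\,[1+2B(k)]\,\mathrm{Osc}\,\psi .$$
   Context: $\mathbb T=\mathbb R/\mathbb Z$. $\mu\in\mathcal M_{a,b,L}$ means: $\mu$ has density $\rho\in C^2(\mathbb T^N,(0,\infty))$, and for every $i$ the conditional densities $\rho_{\hat{\boldsymbol x}_i}(x)=\rho(x;\hat{\boldsymbol x}_i)/\int\rho(s;\hat{\boldsymbol x}_i)ds$ lie in $\mathcal V_a:=\{\psi\in C^2(\mathbb T,(0,\infty)):|(\log\psi)'|<a\}$ and satisfy $\theta_b(\rho_{\hat{\boldsymbol x}_i},\rho_{\hat{\boldsymbol x}'_i})\le L|x_j-x'_j|$ when $\hat{\boldsymbol x}_i,\hat{\boldsymbol x}'_i$ differ only in coordinate $j$, where $\theta_b(\psi_1,\psi_2)=\log\beta_b(\psi_1,\psi_2)+\log\beta_b(\psi_2,\psi_1)$, $\beta_b(\psi_1,\psi_2)=\inf\{t>0:t\psi_1-\psi_2\in\mathcal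 V_b\}$. $\mu_{(x_{i_1},\dots,x_{i_m})}$ is the conditional probability measure of $\mu$ on the torus of the remaining coordinates when coordinates $i_1,\dots,i_m$ are fixed; $\Pi_{i_k}$ is the marginal on coordinate $i_k$. $\mathrm{Osc}_j\psi:=\sup\{|\psi(x_j;\hat{\boldsymbol x}_j)-\psi(x'_j;\hat{\boldsymbol x}_j)|\}$, $\mathrm{Osc}\,\psi:=\max_j\mathrm{Osc}_j\psi$, $\mathcal O_\alpha(\mathbb T^m):=\{\psi\in L^1:\mathrm{Osc}_j\psi\le\alpha\ \forall j\}$. $B(k):=\sup\int_{\mathbb T^{N-k}}\psi\,d[\mu_{(x_{i_1},\dots,x_{i_j},\dots,x_{i_k})}-\mu_{(x_{i_1},\dots,x'_{i_j},\dots,x_{i_k})}]$ over $j\in[1,k]$, $\psi\in\mathcal O_1(\mathbb T^{N-k})$, distinct $i_1,\dots,i_k$ and points $x_{i_1},\dots,x_{i_k},x'_{i_j}\in\mathbb T$. *)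

theory Defs
  imports "HOL-Probability.Probability"
begin

section \<open>The circle T = R/Z, represented by the fundamental domain [0,1)\<close>

definition Tset :: "real set" where
  "Tset = {0..<1}"

definition Tm :: "real measure" where
  "Tm = restrict_space lborel Tset"

definition torus :: "'n set \<Rightarrow> ('n \<Rightarrow> real) measure" where
  "torus J = PiM J (\<lambda>_. Tm)"

definition C2_real :: "(real \<Rightarrow> real) \<Rightarrow> bool" where
  "C2_real f \<longleftrightarrow> (\<exists>f' f''. (\<forall>x. (f has_real_derivative f' x) (at x)) \<and>
       (\<forall>x. (f' has_real_derivative f'' x) (at x)) \<and> continuous_on UNIV f'')"

definition C2_vec :: "(real^'n \<Rightarrow> real) \<Rightarrow> bool" where
  "C2_vec f \<longleftrightarrow> (\<exists>(D1 :: real^'n \<Rightarrow> ((real^'n) \<Rightarrow>\<^sub>L real))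
                    (D2 :: real^'n \<Rightarrow> ((real^'n) \<Rightarrow>\<^sub>L ((real^'n) \<Rightarrow>\<^sub>L real))).
       (\<forall>x. (f has_derivative blinfun_apply (D1 x)) (at x)) \<and>
       (\<forall>x. (D1 has_derivative blinfun_apply (D2 x)) (at x)) \<and>
       continuous_on UNIV D2)"

text \<open>V_a = {psi in C^2(T,(0,oo)) : |(log psi)'| < a}; functions on T are 1-periodic functions on R.\<close>
definition V :: "real \<Rightarrow> (real \<Rightarrow> real) set" where
  "V a = {\<psi>. (\<forall>s. \<psi> (s + 1) = \<psi> s) \<and> (\<forall>s. \<psi> s > 0) \<and> C2_real \<psi> \<and>
             (\<forall>s. \<bar>deriv (\<lambda>u. ln (\<psi> u)) s\<bar> < a)}"

text \<open>beta_b(psi1,psi2) = inf{t>0 : t psi1 - psi2 in V_b} (inf of the empty set = +oo).\<close>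
definition beta :: "real \<Rightarrow> (real \<Rightarrow> real) \<Rightarrow> (real \<Rightarrow> real) \<Rightarrow> ereal" where
  "beta b \<psi>1 \<psi>2 = Inf {ereal t | t. t > 0 \<and> (\<lambda>s. t * \<psi>1 s - \<psi>2 s) \<in> V b}"

definition theta :: "real \<Rightarrow> (real \<Rightarrow> real) \<Rightarrow> (real \<Rightarrow> real) \<Rightarrow> ereal" where
  "theta b \<psi>1 \<psi>2 =
     (case (beta b \<psi>1 \<psi>2, beta b \<psi>2 \<psi>1) of
        (ereal u, ereal v) \<Rightarrow> (if u > 0 \<and> v > 0 then ereal (ln u + ln v) else \<infinity>)
      | _ \<Rightarrow> \<infinity>)"

definition vupd :: "real^'n \<Rightarrow> 'n \<Rightarrow> real \<Rightarrow> real^'n" where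
  "vupd x i s = (\<chi> k. if k = i then s else x $ k)"

definition cdens :: "(real^'n \<Rightarrow> real) \<Rightarrow> 'n \<Rightarrow> real^'n \<Rightarrow> real \<Rightarrow> real" where
  "cdens \<rho> i x = (\<lambda>s. \<rho> (vupd x i s) / integral {0..1} (\<lambda>u. \<rho> (vupd x i u)))"

definition in_torus :: "real^'n \<Rightarrow> bool" where
  "in_torus x \<longleftrightarrow> (\<forall>k. x $ k \<in> Tset)"

text \<open>mu in M_{a,b,L} with density rho (rho is a positive C^2 function on T^N,
  i.e. a positive, 1-periodic in each coordinate, C^2 function on R^N).\<close>
definition in_M :: "real \<Rightarrow> real \<Rightarrow> real \<Rightarrow> ('n::finite \<Rightarrow> real) measure \<Rightarrow> (real^'n \<Rightarrow> real) \<Rightarrow> bool" where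
  "in_M a b L \<mu> \<rho> \<longleftrightarrow>
     \<mu> = density (torus UNIV) (\<lambda>x. ennreal (\<rho> (vec_lambda x))) \<and>
     C2_vec \<rho> \<and> (\<forall>x. \<rho> x > 0) \<and> (\<forall>x i. \<rho> (x + axis i 1) = \<rho> x) \<and>
     (\<forall>i x. in_torus x \<longrightarrow> cdens \<rho> i x \<in> V a) \<and>
     (\<forall>i j x t. j \<noteq> i \<longrightarrow> in_torus x \<longrightarrow> t \<in> Tset \<longrightarrow>
         theta b (cdens \<rho> i x) (cdens \<rho> i (vupd x j t)) \<le> ereal (L * \<bar>x $ j - t\<bar>))"

definition merge_pt :: "'n set \<Rightarrow> ('n \<Rightarrow> real) \<Rightarrow> ('n \<Rightarrow> real) \<Rightarrow> real^'n" where
  "merge_pt F x y = (\<chi> i. if i \<in> F then x i else y i)"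

definition cond_meas :: "(real^'n \<Rightarrow> real) \<Rightarrow> 'n set \<Rightarrow> ('n \<Rightarrow> real) \<Rightarrow> ('n \<Rightarrow> real) measure" where
  "cond_meas \<rho> F x =
     density (torus (UNIV - F))
       (\<lambda>y. ennreal (\<rho> (merge_pt F x y) /
                     integral\<^sup>L (torus (UNIV - F)) (\<lambda>z. \<rho> (merge_pt F x z))))"

definition marginal :: "'n \<Rightarrow> ('n \<Rightarrow> real) measure \<Rightarrow> real measure" where
  "marginal i M = distr M Tm (\<lambda>y. y i)"

definition Osc_j :: "'n set \<Rightarrow> 'n \<Rightarrow> (('n \<Rightarrow> real) \<Rightarrow> real) \<Rightarrow> ereal" where
  "Osc_j J l \<psi> = (SUP (y, s) \<in> space (torus J) \<times> Tset. ereal \<bar>\<psi> y - \<psi> (y(l := s))\<bar>)"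

definition O_class :: "real \<Rightarrow> 'n set \<Rightarrow> (('n \<Rightarrow> real) \<Rightarrow> real) set" where
  "O_class \<alpha> J = {\<psi>. integrable (torus J) \<psi> \<and> (\<forall>l\<in>J. Osc_j J l \<psi> \<le> ereal \<alpha>)}"

definition Osc1 :: "(real \<Rightarrow> real) \<Rightarrow> ereal" where
  "Osc1 \<psi> = (SUP (s, s') \<in> Tset \<times> Tset. ereal \<bar>\<psi> s - \<psi> s'\<bar>)"

text \<open>B(k), for mu with density rho; the list is = [i_1,...,i_k] (0-based positions),
  x gives the fixed values x_{i_1},...,x_{i_k}, and coordinate is!j is replaced by t.\<close>
definition Bk :: "(real^'n::finite \<Rightarrow> real) \<Rightarrow> nat \<Rightarrow> ereal" where
  "Bk \<rho> k = (SUP (is, j, x, t, \<psi>) \<in>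
       {(is, j, x, t, \<psi>). length is = k \<and> distinct is \<and> j < k \<and>
          (\<forall>i\<in>set is. x i \<in> Tset) \<and> t \<in> Tset \<and> \<psi> \<in> O_class 1 (UNIV - set is)}.
       ereal (integral\<^sup>L (cond_meas \<rho> (set is) x) \<psi>
              - integral\<^sup>L (cond_meas \<rho> (set is) (x(is ! j := t))) \<psi>))"

end

theory Submission
  imports Defs
begin

lemma space_Tm[simp]: "space Tm = Tset"
  by (simp add: Tm_def Tset_def)

lemma sets_Tm: "sets Tm = sets (restrict_space lborel Tset)"
  by (simp add: Tm_def)

lemma prob_Tm: "prob_space Tm"
proof -
  have "emeasure lborel Tset = 1" by (simp add: Tset_def)
  then show ?thesis unfolding Tm_def
    by (intro prob_space_restrict_space) (auto simp: Tset_def)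
qed

lemma psf_Tm: "product_sigma_finite (\<lambda>_::'n. Tm)"
  by (simp add: product_sigma_finite_def prob_Tm prob_space_imp_sigma_finite)

lemma prob_torus: "prob_space (torus J)"
  unfolding torus_def by (rule prob_space_PiM) (rule prob_Tm)

lemma space_torus: "space (torus J) = PiE J (\<lambda>_. Tset)"
  by (simp add: torus_def space_PiM)

lemma Tm_borel: "(\<lambda>s. s) \<in> borel_measurable Tm"
  unfolding Tm_def by (rule measurable_restrict_space1) simp

lemma meas_comp: "i \<in> J \<Longrightarrow> (\<lambda>y. y i) \<in> borel_measurable (torus J)"
  unfolding torus_def
  using measurable_comp[OF measurable_component_singleton[of i J "\<lambda>_. Tm"] Tm_borel]
  by (simp add: o_def)

lemma meas_vec:
  fixes f :: "'a \<Rightarrow> real^'n"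
  assumes "\<And>i. (\<lambda>y. f y $ i) \<in> borel_measurable M"
  shows "f \<in> borel_measurable M"
proof (rule borel_measurable_euclidean_space[THEN iffD2], rule ballI)
  fix b :: "real^'n" assume "b \<in> Basis"
  then obtain i where b: "b = axis i 1" by (auto simp: Basis_vec_def)
  have "(\<lambda>x. f x \<bullet> b) = (\<lambda>x. f x $ i)" by (simp add: b inner_axis)
  then show "(\<lambda>x. f x \<bullet> b) \<in> borel_measurable M" using assms by simp
qed

lemma meas_merge: "(\<lambda>y. merge_pt F w y) \<in> borel_measurable (torus (UNIV - F))"
  apply (rule meas_vec)
  subgoal for i by (cases "i \<in> F") (simp_all add: merge_pt_def meas_comp)
  done



lemma int_bnd:
  fixes f :: "'a \<Rightarrow> real"
  assumes "prob_space M" "f \<in> borel_measurable M" "\<And>x. x \<in> space M \<Longrightarrow> \<bar>f x\<bar> \<le> B"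
  shows "integrable M f"
proof -
  interpret prob_space M by fact
  show ?thesis
    by (rule integrable_const_bound[where B=B]) (use assms in auto)
qed

locale dens =
  fixes \<rho> :: "real^'n::finite \<Rightarrow> real"
  assumes cont: "continuous_on UNIV \<rho>" and pos: "\<And>x. \<rho> x > 0"
begin

lemma rho_meas[measurable]: "\<rho> \<in> borel_measurable borel"
  by (rule borel_measurable_continuous_onI[OF cont])

lemma bnds: "\<exists>lo hi. 0 < lo \<and> (\<forall>v. (\<forall>i. v$i \<in> Tset) \<longrightarrow> lo \<le> \<rho> v \<and> \<rho> v \<le> hi)"
proof -
  let ?K = "cbox (vec 0) (vec 1) :: (real^'n) set"
  have "(vec 0::real^'n) \<in> ?K" by (simp add: mem_box_cart)
  then have K: "compact ?K" "?K \<noteq> {}" by auto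
  have c: "continuous_on ?K \<rho>" using cont continuous_on_subset by blast
  obtain a where a: "a \<in> ?K" "\<forall>y\<in>?K. \<rho> a \<le> \<rho> y" using continuous_attains_inf[OF K c] by blast
  obtain b where b: "b \<in> ?K" "\<forall>y\<in>?K. \<rho> y \<le> \<rho> b" using continuous_attains_sup[OF K c] by blast
  have "\<And>v. (\<forall>i. v$i \<in> Tset) \<Longrightarrow> v \<in> ?K" by (auto simp: mem_box_cart Tset_def less_imp_le)
  then show ?thesis using a b pos by (intro exI[of _ "\<rho> a"] exI[of _ "\<rho> b"]) auto
qed

lemma inT_merge:
  assumes "\<forall>i\<in>F. w i \<in> Tset" "y \<in> space (torus (UNIV - F))"
  shows "\<forall>i. merge_pt F w y $ i \<in> Tset"
  using assms by (auto simp: merge_pt_def space_torus PiE_def Pi_def)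

lemma fm[measurable]: "(\<lambda>y. \<rho> (merge_pt F w y)) \<in> borel_measurable (torus (UNIV - F))"
  using measurable_comp[OF meas_merge rho_meas] by (simp add: o_def)

lemma fbnd:
  assumes "\<forall>i\<in>F. w i \<in> Tset"
  obtains lo hi where "0 < lo" "\<And>y. y \<in> space (torus (UNIV - F)) \<Longrightarrow> lo \<le> \<rho> (merge_pt F w y) \<and> \<rho> (merge_pt F w y) \<le> hi"
  using bnds inT_merge[OF assms] by blast

lemma fint:
  assumes "\<forall>i\<in>F. w i \<in> Tset"
  shows "integrable (torus (UNIV - F)) (\<lambda>y. \<rho> (merge_pt F w y))"
proof -
  obtain lo hi where "0 < lo" "\<And>y. y \<in> space (torus (UNIV - F)) \<Longrightarrow> lo \<le> \<rho> (merge_pt F w y) \<and> \<rho> (merge_pt F w y) \<le> hi"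
    using fbnd[OF assms] by blast
  then show ?thesis
    by (intro int_bnd[OF prob_torus fm, where B=hi]) (smt (verit))
qed

definition Zc :: "'n set \<Rightarrow> ('n \<Rightarrow> real) \<Rightarrow> real" where
  "Zc F w = integral\<^sup>L (torus (UNIV - F)) (\<lambda>z. \<rho> (merge_pt F w z))"

lemma Zpos:
  assumes "\<forall>i\<in>F. w i \<in> Tset"
  shows "Zc F w > 0"
proof -
  obtain lo hi where lo: "0 < lo" "\<And>y. y \<in> space (torus (UNIV - F)) \<Longrightarrow> lo \<le> \<rho> (merge_pt F w y) \<and> \<rho> (merge_pt F w y) \<le> hi"
    using fbnd[OF assms] by blast
  interpret prob_space "torus (UNIV - F)" by (rule prob_torus)
  have "lo \<le> Zc F w" unfolding Zc_def
    by (rule integral_ge_const[OF fint[OF assms]]) (use lo in auto)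
  then show ?thesis using lo by simp
qed

lemma cond_eq: "cond_meas \<rho> F w = density (torus (UNIV - F)) (\<lambda>y. ennreal (\<rho> (merge_pt F w y) / Zc F w))"
  by (simp add: cond_meas_def Zc_def)

lemma space_cond[simp]: "space (cond_meas \<rho> F w) = space (torus (UNIV - F))"
  by (simp add: cond_meas_def)

lemma sets_cond[simp, measurable_cong]: "sets (cond_meas \<rho> F w) = sets (torus (UNIV - F))"
  by (simp add: cond_meas_def)

lemma cond_int:
  assumes "\<forall>i\<in>F. w i \<in> Tset" "f \<in> borel_measurable (torus (UNIV - F))"
  shows "integral\<^sup>L (cond_meas \<rho> F w) f =
     integral\<^sup>L (torus (UNIV - F)) (\<lambda>y. \<rho> (merge_pt F w y) / Zc F w * f y)"
  unfolding cond_eq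
  using Zpos[OF assms(1)] pos
  by (subst integral_density) (auto intro!: assms less_imp_le)

lemma prob_cond:
  assumes "\<forall>i\<in>F. w i \<in> Tset"
  shows "prob_space (cond_meas \<rho> F w)"
proof
  have Z: "Zc F w > 0" by (rule Zpos[OF assms])
  have "emeasure (cond_meas \<rho> F w) (space (cond_meas \<rho> F w)) =
     (\<integral>\<^sup>+ y. ennreal (\<rho> (merge_pt F w y) / Zc F w) \<partial>torus (UNIV - F))"
    unfolding cond_eq using Z
    by (subst emeasure_density) (auto intro!: nn_integral_cong simp: indicator_def)
  also have "\<dots> = ennreal (integral\<^sup>L (torus (UNIV - F)) (\<lambda>y. \<rho> (merge_pt F w y) / Zc F w))"
    using Z pos by (intro nn_integral_eq_integral) (auto intro!: fint[OF assms] less_imp_le)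
  also have "\<dots> = 1" using Z by (simp add: Zc_def[symmetric])
  finally show "emeasure (cond_meas \<rho> F w) (space (cond_meas \<rho> F w)) = 1" .
qed

end


lemma upd_space: "y \<in> space (torus J) \<Longrightarrow> l \<in> J \<Longrightarrow> s \<in> Tset \<Longrightarrow> y(l := s) \<in> space (torus J)"
  by (auto simp: space_torus PiE_def extensional_def Pi_def)

lemma osc_pt:
  fixes \<phi> :: "('n \<Rightarrow> real) \<Rightarrow> real"
  assumes J: "finite J" and c: "c \<ge> 0"
    and osc: "\<And>l y s. l \<in> J \<Longrightarrow> y \<in> space (torus J) \<Longrightarrow> s \<in> Tset \<Longrightarrow> \<bar>\<phi> y - \<phi> (y(l := s))\<bar> \<le> c"
    and y: "y \<in> space (torus J)" "y' \<in> space (torus J)"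
  shows "\<bar>\<phi> y - \<phi> y'\<bar> \<le> real (card J) * c"
proof -
  have gen: "\<forall>y y'. y \<in> space (torus J) \<longrightarrow> y' \<in> space (torus J) \<longrightarrow> (\<forall>l\<in>J - D. y l = y' l)
      \<longrightarrow> \<bar>\<phi> y - \<phi> y'\<bar> \<le> real (card D) * c" if "D \<subseteq> J" for D
  proof -
    have "finite D" using that J finite_subset by blast
    then show ?thesis using that
    proof (induction D rule: finite_induct)
      case empty
      show ?case
      proof (intro allI impI)
        fix y y' assume a: "y \<in> space (torus J)" "y' \<in> space (torus J)" "\<forall>l\<in>J - {}. y l = y' l"
        have "y = y'"
        proof
          fix l show "y l = y' l"
            using a by (cases "l \<in> J") (auto simp: space_torus PiE_def extensional_def)
        qed
        then show "\<bar>\<phi> y - \<phi> y'\<bar> \<le> real (card {}) * c" by simp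
      qed
    next
      case (insert l D)
      show ?case
      proof (intro allI impI)
        fix y y' assume a: "y \<in> space (torus J)" "y' \<in> space (torus J)" "\<forall>l'\<in>J - insert l D. y l' = y' l'"
        have lJ: "l \<in> J" using insert by auto
        have yl: "y' l \<in> Tset" using a(2) lJ by (auto simp: space_torus)
        let ?y1 = "y(l := y' l)"
        have y1: "?y1 \<in> space (torus J)" by (rule upd_space[OF a(1) lJ yl])
        have "\<forall>l'\<in>J - D. ?y1 l' = y' l'" using a(3) by auto
        then have h1: "\<bar>\<phi> ?y1 - \<phi> y'\<bar> \<le> real (card D) * c" using insert y1 a by auto
        have h2: "\<bar>\<phi> y - \<phi> ?y1\<bar> \<le> c" by (rule osc[OF lJ a(1) yl])
        have "\<bar>\<phi> y - \<phi> y'\<bar> \<le> c + real (card D) * c" using h1 h2 by linarith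
        then show "\<bar>\<phi> y - \<phi> y'\<bar> \<le> real (card (insert l D)) * c"
          using insert by (simp add: algebra_simps)
      qed
    qed
  qed
  show ?thesis using gen[of J] y by auto
qed

lemma diff_le:
  fixes \<phi> :: "_ \<Rightarrow> real"
  assumes P: "prob_space P" and P': "prob_space P'" and sp: "space P' = space P"
    and m: "\<phi> \<in> borel_measurable P" "\<phi> \<in> borel_measurable P'"
    and d: "\<And>y y'. y \<in> space P \<Longrightarrow> y' \<in> space P \<Longrightarrow> \<phi> y - \<phi> y' \<le> C"
  shows "integral\<^sup>L P \<phi> - integral\<^sup>L P' \<phi> \<le> C"
proof -
  interpret P: prob_space P by fact
  interpret P': prob_space P' by fact
  obtain y0 where y0: "y0 \<in> space P" using P.not_empty by blast
  have bd: "\<bar>\<phi> y\<bar> \<le> \<bar>\<phi> y0\<bar> + \<bar>C\<bar>" if "y \<in> space P" for y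
    using d[OF that y0] d[OF y0 that] by linarith
  have iP: "integrable P \<phi>" by (rule int_bnd[OF P m(1)]) (use bd in auto)
  have iP': "integrable P' \<phi>" by (rule int_bnd[OF P' m(2)]) (use bd sp in auto)
  have "integral\<^sup>L P \<phi> - C \<le> \<phi> y'" if "y' \<in> space P" for y'
  proof -
    have "integral\<^sup>L P \<phi> \<le> \<phi> y' + C"
    proof (rule P.integral_le_const[OF iP], rule AE_I2)
      fix y assume "y \<in> space P"
      then show "\<phi> y \<le> \<phi> y' + C" using d[OF _ that, of y] by linarith
    qed
    then show ?thesis by simp
  qed
  then have "integral\<^sup>L P \<phi> - C \<le> integral\<^sup>L P' \<phi>"
    by (intro P'.integral_ge_const[OF iP'] AE_I2) (use sp in auto)
  then show ?thesis by simp
qed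

context dens begin

lemma osc_from:
  assumes "Osc_j J l \<psi> \<le> ereal c" "y \<in> space (torus J)" "s \<in> Tset"
  shows "\<bar>\<psi> y - \<psi> (y(l := s))\<bar> \<le> c"
proof -
  have "ereal \<bar>\<psi> y - \<psi> (y(l := s))\<bar> \<le> Osc_j J l \<psi>"
    unfolding Osc_j_def using assms(2,3)
    by (intro SUP_upper2[of "(y, s)"]) auto
  then show ?thesis using assms(1) by (metis ereal_less_eq(3) order_trans)
qed

lemma Bk_elem:
  fixes "is" :: "'n list" and j :: nat and x :: "'n \<Rightarrow> real" and t :: real and \<psi> :: "('n \<Rightarrow> real) \<Rightarrow> real"
  assumes v: "length is = n" "distinct is" "j < n" "\<forall>i\<in>set is. x i \<in> Tset" "t \<in> Tset"
    and \<psi>: "\<psi> \<in> O_class 1 (UNIV - set is)"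
  shows "integral\<^sup>L (cond_meas \<rho> (set is) x) \<psi> - integral\<^sup>L (cond_meas \<rho> (set is) (x(is ! j := t))) \<psi> \<le> real CARD('n)"
proof -
  let ?J = "UNIV - set is"
  have x': "\<forall>i\<in>set is. (x(is ! j := t)) i \<in> Tset" using v by auto
  have mt: "\<psi> \<in> borel_measurable (torus ?J)" using \<psi> by (auto simp: O_class_def)
  have pt: "\<bar>\<psi> y - \<psi> y'\<bar> \<le> real (card ?J) * 1" if "y \<in> space (torus ?J)" "y' \<in> space (torus ?J)" for y y'
  proof (rule osc_pt[where J="?J" and c=1, OF _ _ _ that])
    show "\<bar>\<psi> y - \<psi> (y(l := s))\<bar> \<le> 1" if "l \<in> ?J" "y \<in> space (torus ?J)" "s \<in> Tset" for l y s
      using \<psi> that osc_from[of ?J l \<psi> 1 y s] by (auto simp: O_class_def)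
  qed auto
  have "card ?J \<le> CARD('n)" by (rule card_mono) auto
  then have pt2: "\<psi> y - \<psi> y' \<le> real CARD('n)" if "y \<in> space (torus ?J)" "y' \<in> space (torus ?J)" for y y'
    using pt[OF that] by (smt (verit) of_nat_le_iff)
  show ?thesis
    by (rule diff_le[OF prob_cond[OF v(4)] prob_cond[OF x']]) (use mt pt2 in auto)
qed

lemma Bk_fin: "Bk \<rho> n \<le> ereal (real CARD('n))"
  unfolding Bk_def by (rule SUP_least) (auto intro!: Bk_elem)

lemma Bk_nn:
  assumes "1 \<le> n" "n \<le> CARD('n)"
  shows "0 \<le> Bk \<rho> n"
proof -
  obtain xs :: "'n list" where xs: "set xs = UNIV" "distinct xs" using finite_distinct_list[of "UNIV::'n set"] by auto
  have lxs: "length xs = CARD('n)" using xs distinct_card by fastforce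
  let ?is = "take n xs"
  have O0: "(\<lambda>_. 0::real) \<in> O_class 1 (UNIV - set ?is)"
    by (auto simp: O_class_def Osc_j_def intro!: SUP_least)
  have mem: "(?is, 0, \<lambda>_. 0, 0, \<lambda>_. 0) \<in> {(is, j, x, t, \<psi>). length is = n \<and> distinct is \<and> j < n \<and>
          (\<forall>i\<in>set is. x i \<in> Tset) \<and> t \<in> Tset \<and> \<psi> \<in> O_class 1 (UNIV - set is)}"
    using assms xs lxs O0 by (auto simp: Tset_def)
  show ?thesis unfolding Bk_def
    by (rule SUP_upper2[OF mem]) simp
qed

definition bk :: "nat \<Rightarrow> real" where "bk n = real_of_ereal (Bk \<rho> n)"

lemma Bk_eq: "1 \<le> n \<Longrightarrow> n \<le> CARD('n) \<Longrightarrow> Bk \<rho> n = ereal (bk n) \<and> 0 \<le> bk n"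
  using Bk_nn[of n] Bk_fin[of n] unfolding bk_def
  by (cases "Bk \<rho> n") auto

lemma Bk_scale:
  fixes \<phi> :: "('n \<Rightarrow> real) \<Rightarrow> real"
  assumes v: "length is = n" "distinct is" "j < n" "\<forall>i\<in>set is. x i \<in> Tset" "t \<in> Tset" "n \<le> CARD('n)"
    and int: "integrable (torus (UNIV - set is)) \<phi>" and c: "c \<ge> 0"
    and osc: "\<And>l y s. l \<in> UNIV - set is \<Longrightarrow> y \<in> space (torus (UNIV - set is)) \<Longrightarrow> s \<in> Tset
       \<Longrightarrow> \<bar>\<phi> y - \<phi> (y(l := s))\<bar> \<le> c"
  shows "integral\<^sup>L (cond_meas \<rho> (set is) x) \<phi> - integral\<^sup>L (cond_meas \<rho> (set is) (x(is ! j := t))) \<phi> \<le> bk n * c"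
proof -
  let ?J = "UNIV - set is"
  let ?D = "integral\<^sup>L (cond_meas \<rho> (set is) x) \<phi> - integral\<^sup>L (cond_meas \<rho> (set is) (x(is ! j := t))) \<phi>"
  have n1: "1 \<le> n" using v by auto
  obtain b where B: "Bk \<rho> n = ereal b" "0 \<le> b" and bb: "b = bk n" using Bk_eq[OF n1 v(6)] by auto
  have step: "?D \<le> b * (c + e)" if e: "e > 0" for e
  proof -
    have ce: "c + e > 0" using c e by simp
    let ?\<phi> = "\<lambda>y. \<phi> y / (c + e)"
    have O1: "?\<phi> \<in> O_class 1 ?J"
      unfolding O_class_def
    proof (intro CollectI conjI ballI)
      show "integrable (torus ?J) ?\<phi>" using int by simp
      fix l assume l: "l \<in> ?J"
      show "Osc_j ?J l ?\<phi> \<le> ereal 1"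
        unfolding Osc_j_def
      proof (rule SUP_least, clarify)
        fix y s assume ys: "y \<in> space (torus ?J)" "s \<in> Tset"
        have "\<bar>?\<phi> y - ?\<phi> (y(l := s))\<bar> = \<bar>\<phi> y - \<phi> (y(l := s))\<bar> / (c + e)"
          using ce by (simp add: diff_divide_distrib[symmetric])
        also have "\<dots> \<le> c / (c + e)" using osc[OF l ys] ce by (simp add: divide_right_mono)
        also have "\<dots> \<le> 1" using ce e by simp
        finally show "ereal \<bar>?\<phi> y - ?\<phi> (y(l := s))\<bar> \<le> ereal 1" by simp
      qed
    qed
    have mem: "(is, j, x, t, ?\<phi>) \<in> {(is, j, x, t, \<psi>). length is = n \<and> distinct is \<and> j < n \<and>
          (\<forall>i\<in>set is. x i \<in> Tset) \<and> t \<in> Tset \<and> \<psi> \<in> O_class 1 (UNIV - set is)}"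
      using v O1 by simp
    have "ereal (integral\<^sup>L (cond_meas \<rho> (set is) x) ?\<phi> - integral\<^sup>L (cond_meas \<rho> (set is) (x(is ! j := t))) ?\<phi>) \<le> Bk \<rho> n"
      unfolding Bk_def by (rule SUP_upper2[OF mem]) simp
    then have "?D / (c + e) \<le> b" using B by (simp add: diff_divide_distrib)
    then show ?thesis using ce by (simp add: divide_le_eq mult.commute)
  qed
  have "?D \<le> b * c + e" if e: "e > 0" for e
  proof -
    have "?D \<le> b * (c + e / (b + 1))" using step[of "e / (b + 1)"] e B by simp
    also have "\<dots> = b * c + e * (b / (b + 1))" using B by (simp add: algebra_simps)
    also have "\<dots> \<le> b * c + e * 1" using B e by (intro add_left_mono mult_left_mono) auto
    finally show ?thesis by simp
  qed
  then show ?thesis using bb by (simp add: field_le_epsilon)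
qed

end


lemma abs_int_le:
  fixes f :: "_ \<Rightarrow> real"
  assumes P: "prob_space P" and m: "f \<in> borel_measurable P" and b: "\<And>y. y \<in> space P \<Longrightarrow> \<bar>f y\<bar> \<le> B"
  shows "\<bar>integral\<^sup>L P f\<bar> \<le> B"
proof -
  interpret prob_space P by fact
  have i: "integrable P f" using int_bnd[OF P m b] .
  have "integral\<^sup>L P f \<le> B"
    by (rule integral_le_const[OF i], rule AE_I2) (use b in fastforce)
  moreover have "- B \<le> integral\<^sup>L P f"
    by (rule integral_ge_const[OF i], rule AE_I2) (use b in fastforce)
  ultimately show ?thesis by linarith
qed

locale mainloc = dens \<rho> for \<rho> :: "real^'n::finite \<Rightarrow> real" +
  fixes k j :: nat and "is" :: "'n list" and x :: "'n \<Rightarrow> real" and t :: real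
    and \<psi> :: "real \<Rightarrow> real" and Os :: real
  assumes kN: "k \<le> CARD('n)" and len: "length is = k" and dist: "distinct is" and jk: "j < k - 1"
    and xT: "\<forall>i\<in>set (take (k - 1) is). x i \<in> Tset" and tT: "t \<in> Tset"
    and psim: "\<psi> \<in> borel_measurable Tm"
    and Oosc: "\<And>s s'. s \<in> Tset \<Longrightarrow> s' \<in> Tset \<Longrightarrow> \<bar>\<psi> s - \<psi> s'\<bar> \<le> Os"
begin

definition "F = set (take (k - 1) is)"
definition "m = is ! (k - 1)"
definition "H = UNIV - set is"
definition "cj = is ! j"
definition "xp = x(cj := t)"

lemma k2: "2 \<le> k" using jk by simp

lemma is_split: "is = take (k - 1) is @ [m]"
proof -
  have "take (Suc (k - 1)) is = take (k - 1) is @ [is ! (k - 1)]"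
    by (rule take_Suc_conv_app_nth) (use len k2 in simp)
  then show ?thesis using len k2 by (simp add: m_def)
qed

lemma set_is: "set is = insert m F"
  using arg_cong[OF is_split, of set] by (simp add: F_def)

lemma mF: "m \<notin> F"
proof -
  have d: "distinct (take (k - 1) is @ [m])" by (metis dist is_split)
  then show ?thesis by (simp add: F_def)
qed

lemma cF: "cj \<in> F"
proof -
  have "take (k - 1) is ! j = is ! j" using jk by simp
  moreover have "j < length (take (k - 1) is)" using jk len by simp
  ultimately show ?thesis unfolding F_def cj_def by (metis nth_mem)
qed

lemma cm: "cj \<noteq> m" using cF mF by auto

lemma UF: "UNIV - F = insert m H" using set_is mF by (auto simp: H_def)
lemma mH: "m \<notin> H" using set_is by (simp add: H_def)
lemma FH: "i \<in> F \<Longrightarrow> i \<notin> H" using set_is by (simp add: H_def)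

lemma xTs: "\<forall>i\<in>F. x i \<in> Tset" using xT by (simp add: F_def)
lemma xpT: "\<forall>i\<in>F. xp i \<in> Tset" using xTs tT by (simp add: xp_def)

lemma torusF: "torus (UNIV - F) = PiM (insert m H) (\<lambda>_. Tm)" by (simp add: torus_def UF)
lemma torusH: "torus H = PiM H (\<lambda>_. Tm)" by (simp add: torus_def)

lemma psi_bnd: "\<exists>B. \<forall>s\<in>Tset. \<bar>\<psi> s\<bar> \<le> B"
proof -
  have "0 \<in> Tset" by (simp add: Tset_def)
  then show ?thesis using Oosc by (intro exI[of _ "\<bar>\<psi> 0\<bar> + Os"]) (smt (verit))
qed

definition r :: "('n \<Rightarrow> real) \<Rightarrow> ('n \<Rightarrow> real) \<Rightarrow> real \<Rightarrow> real" where
  "r w u s = \<rho> (merge_pt F w (u(m := s)))"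

definition zm :: "('n \<Rightarrow> real) \<Rightarrow> ('n \<Rightarrow> real) \<Rightarrow> ('n \<Rightarrow> real)" where
  "zm w u = (\<lambda>i. if i \<in> F then w i else u i)"

lemma r_meas: "(\<lambda>(u, s). r w u s) \<in> borel_measurable (torus H \<Otimes>\<^sub>M Tm)"
proof -
  have "(\<lambda>(u, s). u(m := s)) \<in> measurable (torus H \<Otimes>\<^sub>M Tm) (torus (UNIV - F))"
    unfolding torusF torusH by (rule measurable_add_dim)
  from measurable_comp[OF this fm[of F w]] show ?thesis
    by (simp add: o_def r_def case_prod_beta')
qed

lemma r_meas': "(\<lambda>(s, u). r w u s) \<in> borel_measurable (Tm \<Otimes>\<^sub>M torus H)"
  using measurable_comp[OF measurable_pair_swap' r_meas[of w]] by (simp add: o_def case_prod_beta')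

lemma r_bnd:
  assumes "\<forall>i\<in>F. w i \<in> Tset"
  obtains lo hi where "0 < lo" "\<And>u s. u \<in> space (torus H) \<Longrightarrow> s \<in> Tset \<Longrightarrow> lo \<le> r w u s \<and> r w u s \<le> hi"
proof -
  obtain lo hi where lh: "0 < lo" "\<And>y. y \<in> space (torus (UNIV - F)) \<Longrightarrow> lo \<le> \<rho> (merge_pt F w y) \<and> \<rho> (merge_pt F w y) \<le> hi"
    using fbnd[OF assms] by blast
  have mem: "u(m := s) \<in> space (torus (UNIV - F))" if "u \<in> space (torus H)" "s \<in> Tset" for u s
    using that mH by (auto simp: space_torus UF PiE_def extensional_def Pi_def)
  show ?thesis
  proof (rule that[of lo hi])
    show "0 < lo" by (rule lh(1))
    fix u s assume "u \<in> space (torus H)" "s \<in> Tset"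
    then show "lo \<le> r w u s \<and> r w u s \<le> hi" using lh(2)[OF mem] by (simp add: r_def)
  qed
qed

end


context mainloc begin

lemma comp_m: "(\<lambda>y. y m) \<in> measurable (torus (UNIV - F)) Tm"
  unfolding torus_def by (rule measurable_component_singleton) (use mF in simp)

lemma r_meas_s: "(\<lambda>s. r w u s) \<in> borel_measurable Tm"
proof -
  have "(\<lambda>s. merge_pt F w (u(m := s))) \<in> borel_measurable Tm"
  proof (rule meas_vec)
    fix i show "(\<lambda>s. merge_pt F w (u(m := s)) $ i) \<in> borel_measurable Tm"
      by (cases "i \<in> F"; cases "i = m") (simp_all add: merge_pt_def Tm_borel)
  qed
  from measurable_comp[OF this rho_meas] show ?thesis by (simp add: r_def o_def)
qed

lemma marg_int:
  assumes good: "\<forall>i\<in>F. w i \<in> Tset" and f: "f \<in> borel_measurable Tm"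
    and fb: "\<And>s. s \<in> Tset \<Longrightarrow> \<bar>f s\<bar> \<le> Bf"
  shows "integral\<^sup>L (marginal m (cond_meas \<rho> F w)) f =
    (\<integral>u. (\<integral>s. r w u s / Zc F w * f s \<partial>Tm) \<partial>torus H)"
proof -
  have pm: "(\<lambda>y. y m) \<in> measurable (cond_meas \<rho> F w) Tm"
    using comp_m by (simp cong: measurable_cong_sets)
  have fm2: "(\<lambda>y. f (y m)) \<in> borel_measurable (torus (UNIV - F))"
    using measurable_comp[OF comp_m f] by (simp add: o_def)
  have Z: "Zc F w > 0" by (rule Zpos[OF good])
  obtain lo hi where lh: "0 < lo" "\<And>y. y \<in> space (torus (UNIV - F)) \<Longrightarrow> lo \<le> \<rho> (merge_pt F w y) \<and> \<rho> (merge_pt F w y) \<le> hi"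
    using fbnd[OF good] by blast
  have intg: "integrable (torus (UNIV - F)) (\<lambda>y. \<rho> (merge_pt F w y) / Zc F w * f (y m))"
  proof (rule int_bnd[OF prob_torus, where B="hi / Zc F w * Bf"])
    show "(\<lambda>y. \<rho> (merge_pt F w y) / Zc F w * f (y m)) \<in> borel_measurable (torus (UNIV - F))"
      using fm2 by measurable
    fix y assume y: "y \<in> space (torus (UNIV - F))"
    have ym: "y m \<in> Tset" using y mF by (auto simp: space_torus)
    have "\<bar>\<rho> (merge_pt F w y) / Zc F w * f (y m)\<bar> = \<rho> (merge_pt F w y) / Zc F w * \<bar>f (y m)\<bar>"
      using Z pos[of "merge_pt F w y"] by (simp add: abs_mult)
    also have "\<dots> \<le> hi / Zc F w * Bf"
      using lh(2)[OF y] fb[OF ym] Z pos[of "merge_pt F w y"]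
      by (intro mult_mono divide_right_mono) auto
    finally show "\<bar>\<rho> (merge_pt F w y) / Zc F w * f (y m)\<bar> \<le> hi / Zc F w * Bf" .
  qed
  have "integral\<^sup>L (marginal m (cond_meas \<rho> F w)) f = (\<integral>y. f (y m) \<partial>cond_meas \<rho> F w)"
    unfolding marginal_def by (rule integral_distr[OF pm f])
  also have "\<dots> = (\<integral>y. \<rho> (merge_pt F w y) / Zc F w * f (y m) \<partial>torus (UNIV - F))"
    by (rule cond_int[OF good fm2])
  also have "\<dots> = (\<integral>y. \<rho> (merge_pt F w y) / Zc F w * f (y m) \<partial>PiM (insert m H) (\<lambda>_. Tm))"
    by (simp only: torusF)
  also have "\<dots> = (\<integral>u. (\<integral>s. \<rho> (merge_pt F w (u(m := s))) / Zc F w * f s \<partial>Tm) \<partial>PiM H (\<lambda>_. Tm))"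
    using product_sigma_finite.product_integral_insert[OF psf_Tm, of H m "\<lambda>y. \<rho> (merge_pt F w y) / Zc F w * f (y m)"]
      intg mH by (simp add: torusF)
  also have "\<dots> = (\<integral>u. (\<integral>s. r w u s / Zc F w * f s \<partial>Tm) \<partial>torus H)"
    by (simp add: r_def torusH)
  finally show ?thesis .
qed

definition gfun :: "('n \<Rightarrow> real) \<Rightarrow> ('n \<Rightarrow> real) \<Rightarrow> real" where
  "gfun w u = integral\<^sup>L (cond_meas \<rho> (UNIV - {m}) (zm w u)) (\<lambda>y. \<psi> (y m))"

lemma zm_good:
  assumes good: "\<forall>i\<in>F. w i \<in> Tset" and u: "u \<in> space (torus H)"
  shows "\<forall>i\<in>UNIV - {m}. zm w u i \<in> Tset"
proof
  fix i assume i: "i \<in> UNIV - {m}"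
  show "zm w u i \<in> Tset"
  proof (cases "i \<in> F")
    case True then show ?thesis using good by (simp add: zm_def)
  next
    case False
    then have "i \<in> H" using i set_is by (auto simp: H_def)
    then show ?thesis using u False by (auto simp: zm_def space_torus)
  qed
qed

lemma merge_zm: "merge_pt (UNIV - {m}) (zm w u) y = merge_pt F w (u(m := y m))"
  using mF by (auto simp: merge_pt_def zm_def vec_eq_iff)

lemma g_eq:
  assumes good: "\<forall>i\<in>F. w i \<in> Tset" and u: "u \<in> space (torus H)"
  shows "gfun w u = (\<integral>s. r w u s * \<psi> s \<partial>Tm) / (\<integral>s. r w u s \<partial>Tm)"
proof -
  have gz: "\<forall>i\<in>UNIV - {m}. zm w u i \<in> Tset" by (rule zm_good[OF good u])
  have Um: "UNIV - (UNIV - {m}) = {m}" by auto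
  have pm: "(\<lambda>y. \<psi> (y m)) \<in> borel_measurable (torus (UNIV - (UNIV - {m})))"
    unfolding Um torus_def using measurable_comp[OF measurable_component_singleton[of m "{m}" "\<lambda>_. Tm"] psim]
    by (simp add: o_def)
  have rs: "(\<lambda>s. r w u s / Zc (UNIV - {m}) (zm w u) * \<psi> s) \<in> borel_measurable Tm"
    using r_meas_s psim by measurable
  have Zeq: "Zc (UNIV - {m}) (zm w u) = (\<integral>s. r w u s \<partial>Tm)"
    unfolding Zc_def Um torus_def merge_zm
    using product_sigma_finite.product_integral_singleton[OF psf_Tm, of "\<lambda>s. r w u s" m] r_meas_s
    by (simp add: r_def)
  have "gfun w u = (\<integral>y. \<rho> (merge_pt (UNIV - {m}) (zm w u) y) / Zc (UNIV - {m}) (zm w u) * \<psi> (y m)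
        \<partial>torus (UNIV - (UNIV - {m})))"
    unfolding gfun_def by (rule cond_int[OF gz pm])
  also have "\<dots> = (\<integral>y. (\<lambda>s. r w u s / Zc (UNIV - {m}) (zm w u) * \<psi> s) (y m) \<partial>PiM {m} (\<lambda>_. Tm))"
    unfolding Um torus_def merge_zm by (simp add: r_def)
  also have "\<dots> = (\<integral>s. r w u s / Zc (UNIV - {m}) (zm w u) * \<psi> s \<partial>Tm)"
    by (rule product_sigma_finite.product_integral_singleton[OF psf_Tm rs])
  also have "\<dots> = (\<integral>s. r w u s * \<psi> s \<partial>Tm) / Zc (UNIV - {m}) (zm w u)"
    by (simp add: field_simps)
  finally show ?thesis by (simp add: Zeq)
qed

lemma merge_is: "merge_pt (set is) (w(m := s)) y = merge_pt F w (y(m := s))"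
  using mF set_is by (auto simp: merge_pt_def vec_eq_iff)

lemma G_int:
  assumes good: "\<forall>i\<in>F. w i \<in> Tset" and s: "s \<in> Tset" and \<phi>: "\<phi> \<in> borel_measurable (torus H)"
  shows "integral\<^sup>L (cond_meas \<rho> (set is) (w(m := s))) \<phi> =
     (\<integral>u. r w u s * \<phi> u \<partial>torus H) / (\<integral>u. r w u s \<partial>torus H)"
proof -
  have g': "\<forall>i\<in>set is. (w(m := s)) i \<in> Tset" using good s set_is by auto
  have UH: "UNIV - set is = H" by (simp add: H_def)
  have "integral\<^sup>L (cond_meas \<rho> (set is) (w(m := s))) \<phi> =
      (\<integral>y. \<rho> (merge_pt (set is) (w(m := s)) y) / Zc (set is) (w(m := s)) * \<phi> y \<partial>torus (UNIV - set is))"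
    by (rule cond_int[OF g']) (simp add: UH \<phi>)
  also have "\<dots> = (\<integral>u. r w u s * \<phi> u \<partial>torus H) / Zc (set is) (w(m := s))"
    by (simp add: UH merge_is r_def field_simps)
  also have "Zc (set is) (w(m := s)) = (\<integral>u. r w u s \<partial>torus H)"
    by (simp add: Zc_def UH merge_is r_def)
  finally show ?thesis .
qed

end


context mainloc begin

definition "Bp = (SOME B. \<forall>s\<in>Tset. \<bar>\<psi> s\<bar> \<le> B)"
lemma Bp: "s \<in> Tset \<Longrightarrow> \<bar>\<psi> s\<bar> \<le> Bp"
  using someI_ex[OF psi_bnd] unfolding Bp_def by blast

definition Gfun :: "('n \<Rightarrow> real) \<Rightarrow> real \<Rightarrow> real" where
  "Gfun w s = integral\<^sup>L (cond_meas \<rho> (set is) (w(m := s))) (gfun w)"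

lemma r_meas_u: "s \<in> Tset \<Longrightarrow> (\<lambda>u. r w u s) \<in> borel_measurable (torus H)"
  using measurable_comp[OF measurable_Pair2'[of s Tm "torus H"] r_meas[of w]] by (simp add: o_def)

lemma sfH: "sigma_finite_measure (torus H)" by (rule prob_space_imp_sigma_finite[OF prob_torus])
lemma sfT: "sigma_finite_measure Tm" by (rule prob_space_imp_sigma_finite[OF prob_Tm])
lemma psHT: "pair_sigma_finite (torus H) Tm"
  by (simp add: pair_sigma_finite_def sfH sfT)

lemma g_meas:
  assumes good: "\<forall>i\<in>F. w i \<in> Tset"
  shows "gfun w \<in> borel_measurable (torus H)"
proof -
  have m1: "(\<lambda>(u, s). r w u s * \<psi> s) \<in> borel_measurable (torus H \<Otimes>\<^sub>M Tm)"
    using borel_measurable_times[OF r_meas[of w] measurable_comp[OF measurable_snd psim]]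
    by (simp add: o_def case_prod_beta')
  have m2: "(\<lambda>(u, s). r w u s) \<in> borel_measurable (torus H \<Otimes>\<^sub>M Tm)" by (rule r_meas)
  have "(\<lambda>u. (\<integral>s. r w u s * \<psi> s \<partial>Tm) / (\<integral>s. r w u s \<partial>Tm)) \<in> borel_measurable (torus H)"
    by (intro borel_measurable_divide sigma_finite_measure.borel_measurable_lebesgue_integral[OF sfT] m1 m2)
  then show ?thesis
    by (subst measurable_cong[where g="\<lambda>u. (\<integral>s. r w u s * \<psi> s \<partial>Tm) / (\<integral>s. r w u s \<partial>Tm)"])
       (auto simp: g_eq[OF good])
qed

lemma g_bnd:
  assumes good: "\<forall>i\<in>F. w i \<in> Tset" and u: "u \<in> space (torus H)"
  shows "\<bar>gfun w u\<bar> \<le> Bp"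
  unfolding gfun_def
proof (rule abs_int_le[OF prob_cond[OF zm_good[OF good u]]])
  have Um: "UNIV - (UNIV - {m}) = {m}" by auto
  have "(\<lambda>y. \<psi> (y m)) \<in> borel_measurable (torus {m})"
    unfolding torus_def using measurable_comp[OF measurable_component_singleton[of m "{m}" "\<lambda>_. Tm"] psim]
    by (simp add: o_def)
  then show "(\<lambda>y. \<psi> (y m)) \<in> borel_measurable (cond_meas \<rho> (UNIV - {m}) (zm w u))"
    by (simp add: Um cong: measurable_cong_sets)
  fix y assume "y \<in> space (cond_meas \<rho> (UNIV - {m}) (zm w u))"
  then have "y m \<in> Tset" by (auto simp: Um space_torus)
  then show "\<bar>\<psi> (y m)\<bar> \<le> Bp" by (rule Bp)
qed

lemma G_meas:
  assumes good: "\<forall>i\<in>F. w i \<in> Tset"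
  shows "Gfun w \<in> borel_measurable Tm"
proof -
  have m1: "(\<lambda>(s, u). r w u s * gfun w u) \<in> borel_measurable (Tm \<Otimes>\<^sub>M torus H)"
    using borel_measurable_times[OF r_meas'[of w] measurable_comp[OF measurable_snd g_meas[OF good]]]
    by (simp add: o_def case_prod_beta')
  have m2: "(\<lambda>(s, u). r w u s) \<in> borel_measurable (Tm \<Otimes>\<^sub>M torus H)" by (rule r_meas')
  have "(\<lambda>s. (\<integral>u. r w u s * gfun w u \<partial>torus H) / (\<integral>u. r w u s \<partial>torus H)) \<in> borel_measurable Tm"
    by (intro borel_measurable_divide sigma_finite_measure.borel_measurable_lebesgue_integral[OF sfH] m1 m2)
  then show ?thesis
    by (subst measurable_cong[where g="\<lambda>s. (\<integral>u. r w u s * gfun w u \<partial>torus H) / (\<integral>u. r w u s \<partial>torus H)"])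
       (auto simp: Gfun_def G_int[OF good _ g_meas[OF good]])
qed

lemma G_bnd:
  assumes good: "\<forall>i\<in>F. w i \<in> Tset" and s: "s \<in> Tset"
  shows "\<bar>Gfun w s\<bar> \<le> Bp"
  unfolding Gfun_def
proof (rule abs_int_le[OF prob_cond])
  show "\<forall>i\<in>set is. (w(m := s)) i \<in> Tset" using good s set_is by auto
  show "gfun w \<in> borel_measurable (cond_meas \<rho> (set is) (w(m := s)))"
    using g_meas[OF good] by (simp add: H_def cong: measurable_cong_sets)
  fix y assume "y \<in> space (cond_meas \<rho> (set is) (w(m := s)))"
  then show "\<bar>gfun w y\<bar> \<le> Bp" by (intro g_bnd[OF good]) (simp add: H_def)
qed

end


context mainloc begin

lemma int_r_s_pos:
  assumes good: "\<forall>i\<in>F. w i \<in> Tset" and u: "u \<in> space (torus H)"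
  shows "(\<integral>s. r w u s \<partial>Tm) > 0"
proof -
  obtain lo hi where lh: "0 < lo" "\<And>u s. u \<in> space (torus H) \<Longrightarrow> s \<in> Tset \<Longrightarrow> lo \<le> r w u s \<and> r w u s \<le> hi"
    using r_bnd[OF good] by blast
  interpret prob_space Tm by (rule prob_Tm)
  have i: "integrable Tm (\<lambda>s. r w u s)"
  proof (rule int_bnd[OF prob_Tm r_meas_s, where B=hi])
    fix s assume "s \<in> space Tm"
    then show "\<bar>r w u s\<bar> \<le> hi" using lh(1) lh(2)[OF u, of s] by (auto simp: abs_le_iff)
  qed
  have "lo \<le> (\<integral>s. r w u s \<partial>Tm)"
    by (rule integral_ge_const[OF i], rule AE_I2) (use lh u in auto)
  then show ?thesis using lh by simp
qed

lemma int_r_u_pos: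
  assumes good: "\<forall>i\<in>F. w i \<in> Tset" and s: "s \<in> Tset"
  shows "(\<integral>u. r w u s \<partial>torus H) > 0"
proof -
  obtain lo hi where lh: "0 < lo" "\<And>u s. u \<in> space (torus H) \<Longrightarrow> s \<in> Tset \<Longrightarrow> lo \<le> r w u s \<and> r w u s \<le> hi"
    using r_bnd[OF good] by blast
  interpret prob_space "torus H" by (rule prob_torus)
  have i: "integrable (torus H) (\<lambda>u. r w u s)"
  proof (rule int_bnd[OF prob_torus r_meas_u[OF s], where B=hi])
    fix u assume "u \<in> space (torus H)"
    then show "\<bar>r w u s\<bar> \<le> hi" using lh(1) lh(2)[OF _ s, of u] by (auto simp: abs_le_iff)
  qed
  have "lo \<le> (\<integral>u. r w u s \<partial>torus H)"
    by (rule integral_ge_const[OF i], rule AE_I2) (use lh s in auto)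
  then show ?thesis using lh by simp
qed

lemma fub:
  assumes good: "\<forall>i\<in>F. w i \<in> Tset"
    and hm: "(\<lambda>(u, s). h u s) \<in> borel_measurable (torus H \<Otimes>\<^sub>M Tm)"
    and hb: "\<And>u s. u \<in> space (torus H) \<Longrightarrow> s \<in> Tset \<Longrightarrow> \<bar>h u s\<bar> \<le> Bh"
  shows "(\<integral>u. (\<integral>s. r w u s / Zc F w * h u s \<partial>Tm) \<partial>torus H) =
         (\<integral>s. (\<integral>u. r w u s / Zc F w * h u s \<partial>torus H) \<partial>Tm)"
proof -
  obtain lo hi where lh: "0 < lo" "\<And>u s. u \<in> space (torus H) \<Longrightarrow> s \<in> Tset \<Longrightarrow> lo \<le> r w u s \<and> r w u s \<le> hi"
    using r_bnd[OF good] by blast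
  have Z: "Zc F w > 0" by (rule Zpos[OF good])
  have i: "integrable (torus H \<Otimes>\<^sub>M Tm) (\<lambda>(u, s). r w u s / Zc F w * h u s)"
  proof (rule int_bnd[OF prob_space_pair[OF prob_torus prob_Tm], where B="hi / Zc F w * Bh"])
    show "(\<lambda>(u, s). r w u s / Zc F w * h u s) \<in> borel_measurable (torus H \<Otimes>\<^sub>M Tm)"
      using borel_measurable_times[OF borel_measurable_divide[OF r_meas[of w] borel_measurable_const[of "Zc F w"]] hm]
      by (simp add: case_prod_beta')
    fix p assume "p \<in> space (torus H \<Otimes>\<^sub>M Tm)"
    then obtain u s where p: "p = (u, s)" "u \<in> space (torus H)" "s \<in> Tset" by (auto simp: space_pair_measure)
    have "\<bar>r w u s / Zc F w * h u s\<bar> = r w u s / Zc F w * \<bar>h u s\<bar>"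
      using Z lh(1) lh(2)[OF p(2,3)] by (simp add: abs_mult)
    also have "\<dots> \<le> hi / Zc F w * Bh"
      using lh(1) lh(2)[OF p(2,3)] hb[OF p(2,3)] Z by (intro mult_mono divide_right_mono) auto
    finally show "\<bar>(\<lambda>(u, s). r w u s / Zc F w * h u s) p\<bar> \<le> hi / Zc F w * Bh" by (simp add: p)
  qed
  show ?thesis
    by (rule pair_sigma_finite.Fubini_integral[OF psHT i, symmetric])
qed

lemma psi_G:
  assumes good: "\<forall>i\<in>F. w i \<in> Tset"
  shows "integral\<^sup>L (marginal m (cond_meas \<rho> F w)) \<psi> = integral\<^sup>L (marginal m (cond_meas \<rho> F w)) (Gfun w)"
proof -
  let ?Z = "Zc F w"
  have "integral\<^sup>L (marginal m (cond_meas \<rho> F w)) \<psi> = (\<integral>u. (\<integral>s. r w u s / ?Z * \<psi> s \<partial>Tm) \<partial>torus H)"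
    by (rule marg_int[OF good psim Bp])
  also have "\<dots> = (\<integral>u. (\<integral>s. r w u s / ?Z * gfun w u \<partial>Tm) \<partial>torus H)"
  proof (rule Bochner_Integration.integral_cong[OF refl])
    fix u assume u: "u \<in> space (torus H)"
    have A: "(\<integral>s. r w u s \<partial>Tm) > 0" by (rule int_r_s_pos[OF good u])
    have e: "(\<integral>s. r w u s * \<psi> s \<partial>Tm) = gfun w u * (\<integral>s. r w u s \<partial>Tm)"
      using g_eq[OF good u] A by simp
    have "(\<integral>s. r w u s / ?Z * \<psi> s \<partial>Tm) = (\<integral>s. r w u s * \<psi> s \<partial>Tm) / ?Z"
      by (simp add: field_simps)
    also have "\<dots> = (\<integral>s. r w u s \<partial>Tm) / ?Z * gfun w u" using e by simp
    also have "\<dots> = (\<integral>s. r w u s / ?Z * gfun w u \<partial>Tm)" by simp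
    finally show "(\<integral>s. r w u s / ?Z * \<psi> s \<partial>Tm) = (\<integral>s. r w u s / ?Z * gfun w u \<partial>Tm)" .
  qed
  also have "\<dots> = (\<integral>s. (\<integral>u. r w u s / ?Z * gfun w u \<partial>torus H) \<partial>Tm)"
  proof (rule fub[OF good, where Bh=Bp])
    show "(\<lambda>(u, s). gfun w u) \<in> borel_measurable (torus H \<Otimes>\<^sub>M Tm)"
      using measurable_comp[OF measurable_fst g_meas[OF good]] by (simp add: o_def case_prod_beta')
  qed (rule g_bnd[OF good])
  also have "\<dots> = (\<integral>s. (\<integral>u. r w u s / ?Z * Gfun w s \<partial>torus H) \<partial>Tm)"
  proof (rule Bochner_Integration.integral_cong[OF refl])
    fix s assume s: "s \<in> space Tm"
    then have s': "s \<in> Tset" by simp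
    have A: "(\<integral>u. r w u s \<partial>torus H) > 0" by (rule int_r_u_pos[OF good s'])
    have e: "(\<integral>u. r w u s * gfun w u \<partial>torus H) = Gfun w s * (\<integral>u. r w u s \<partial>torus H)"
      using G_int[OF good s' g_meas[OF good]] A by (simp add: Gfun_def)
    have "(\<integral>u. r w u s / ?Z * gfun w u \<partial>torus H) = (\<integral>u. r w u s * gfun w u \<partial>torus H) / ?Z"
      by (simp add: field_simps)
    also have "\<dots> = (\<integral>u. r w u s \<partial>torus H) / ?Z * Gfun w s" using e by simp
    also have "\<dots> = (\<integral>u. r w u s / ?Z * Gfun w s \<partial>torus H)" by simp
    finally show "(\<integral>u. r w u s / ?Z * gfun w u \<partial>torus H) = (\<integral>u. r w u s / ?Z * Gfun w s \<partial>torus H)" .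
  qed
  also have "\<dots> = (\<integral>u. (\<integral>s. r w u s / ?Z * Gfun w s \<partial>Tm) \<partial>torus H)"
  proof (rule fub[OF good, where Bh=Bp, symmetric])
    show "(\<lambda>(u, s). Gfun w s) \<in> borel_measurable (torus H \<Otimes>\<^sub>M Tm)"
      using measurable_comp[OF measurable_snd G_meas[OF good]] by (simp add: o_def case_prod_beta')
  qed (rule G_bnd[OF good])
  also have "\<dots> = integral\<^sup>L (marginal m (cond_meas \<rho> F w)) (Gfun w)"
    by (rule marg_int[OF good G_meas[OF good] G_bnd[OF good], symmetric])
  finally show ?thesis .
qed

end


context mainloc begin

definition "b1 = bk (CARD('n) - 1)"

lemma Os_nn: "0 \<le> Os"
proof -
  have "0 \<in> Tset" by (simp add: Tset_def)
  from Oosc[OF this this] show ?thesis by simp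
qed

lemma b1_nn: "0 \<le> b1"
  using Bk_eq[of "CARD('n) - 1"] k2 kN by (simp add: b1_def)

lemma bkk_nn: "0 \<le> bk k"
  using Bk_eq[of k] k2 kN by simp

lemma Bz:
  assumes z: "\<forall>i\<in>UNIV - {m}. z i \<in> Tset" and l: "l \<noteq> m" and s: "s \<in> Tset"
  shows "integral\<^sup>L (cond_meas \<rho> (UNIV - {m}) z) (\<lambda>y. \<psi> (y m))
       - integral\<^sup>L (cond_meas \<rho> (UNIV - {m}) (z(l := s))) (\<lambda>y. \<psi> (y m)) \<le> b1 * Os"
proof -
  obtain xs :: "'n list" where xs: "set xs = UNIV" "distinct xs" using finite_distinct_list[of "UNIV::'n set"] by auto
  define L where "L = l # filter (\<lambda>i. i \<noteq> m \<and> i \<noteq> l) xs"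
  have setL: "set L = UNIV - {m}" using xs l by (auto simp: L_def)
  have dL: "distinct L" using xs by (simp add: L_def)
  have "length L = card (UNIV - {m})" using distinct_card[OF dL] setL by simp
  then have lenL: "length L = CARD('n) - 1" by (simp add: card_Diff_singleton)
  have L0: "L ! 0 = l" by (simp add: L_def)
  have Um: "UNIV - set L = {m}" using setL by auto
  have pm: "(\<lambda>y. \<psi> (y m)) \<in> borel_measurable (torus {m})"
    unfolding torus_def using measurable_comp[OF measurable_component_singleton[of m "{m}" "\<lambda>_. Tm"] psim]
    by (simp add: o_def)
  have "integral\<^sup>L (cond_meas \<rho> (set L) z) (\<lambda>y. \<psi> (y m))
       - integral\<^sup>L (cond_meas \<rho> (set L) (z(L ! 0 := s))) (\<lambda>y. \<psi> (y m)) \<le> bk (CARD('n) - 1) * Os"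
  proof (rule Bk_scale)
    show "length L = CARD('n) - 1" by (rule lenL)
    show "distinct L" by (rule dL)
    show "0 < CARD('n) - 1" using k2 kN by simp
    show "\<forall>i\<in>set L. z i \<in> Tset" using z setL by simp
    show "s \<in> Tset" by (rule s)
    show "CARD('n) - 1 \<le> CARD('n)" by simp
    show "integrable (torus (UNIV - set L)) (\<lambda>y. \<psi> (y m))"
      unfolding Um
    proof (rule int_bnd[OF prob_torus pm, where B=Bp])
      fix y assume "y \<in> space (torus {m})"
      then show "\<bar>\<psi> (y m)\<bar> \<le> Bp" by (intro Bp) (auto simp: space_torus)
    qed
    show "0 \<le> Os" by (rule Os_nn)
    fix l' y s' assume a: "l' \<in> UNIV - set L" "y \<in> space (torus (UNIV - set L))" "s' \<in> Tset"
    then have "l' = m" "y m \<in> Tset" using Um by (auto simp: space_torus)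
    then show "\<bar>\<psi> (y m) - \<psi> ((y(l' := s')) m)\<bar> \<le> Os" using Oosc a(3) by simp
  qed
  then show ?thesis by (simp add: setL L0 b1_def)
qed

lemma K7a:
  assumes u: "u \<in> space (torus H)"
  shows "gfun x u - gfun xp u \<le> b1 * Os"
proof -
  have e: "(zm x u)(cj := t) = zm xp u" using cF by (auto simp: zm_def xp_def)
  show ?thesis using Bz[OF zm_good[OF xTs u] cm tT] unfolding e gfun_def .
qed

lemma K7b:
  assumes good: "\<forall>i\<in>F. w i \<in> Tset" and l: "l \<in> H" and u: "u \<in> space (torus H)" and s: "s \<in> Tset"
  shows "\<bar>gfun w u - gfun w (u(l := s))\<bar> \<le> b1 * Os"
proof -
  have lF: "l \<notin> F" using l FH by blast
  have lm: "l \<noteq> m" using l mH by blast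
  have u': "u(l := s) \<in> space (torus H)" by (rule upd_space[OF u l s])
  have ul: "u l \<in> Tset" using u l by (auto simp: space_torus)
  have e1: "(zm w u)(l := s) = zm w (u(l := s))" using lF by (auto simp: zm_def)
  have e2: "(zm w (u(l := s)))(l := u l) = zm w u" using lF by (auto simp: zm_def)
  have a: "gfun w u - gfun w (u(l := s)) \<le> b1 * Os"
    using Bz[OF zm_good[OF good u] lm s] unfolding e1 gfun_def .
  have b: "gfun w (u(l := s)) - gfun w u \<le> b1 * Os"
    using Bz[OF zm_good[OF good u'] lm ul] unfolding e2 gfun_def .
  show ?thesis using a b by linarith
qed

lemma g_int:
  assumes good: "\<forall>i\<in>F. w i \<in> Tset"
  shows "integrable (torus H) (gfun w)"
  by (rule int_bnd[OF prob_torus g_meas[OF good] g_bnd[OF good]])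

lemma K8c:
  assumes s: "s \<in> Tset"
  shows "Gfun x s - Gfun xp s \<le> b1 * Os * (1 + bk k)"
proof -
  let ?q = "cond_meas \<rho> (set is) (x(m := s))"
  have gq: "\<forall>i\<in>set is. (x(m := s)) i \<in> Tset" using xTs s set_is by auto
  have UH: "UNIV - set is = H" by (simp add: H_def)
  have pq: "prob_space ?q" by (rule prob_cond[OF gq])
  have mg: "gfun w \<in> borel_measurable ?q" if "\<forall>i\<in>F. w i \<in> Tset" for w
    using g_meas[OF that] by (simp add: UH cong: measurable_cong_sets)
  have ig: "integrable ?q (gfun w)" if "\<forall>i\<in>F. w i \<in> Tset" for w
    by (rule int_bnd[OF pq mg[OF that]]) (use g_bnd[OF that] UH in auto)
  have first: "integral\<^sup>L ?q (gfun x) - integral\<^sup>L ?q (gfun xp) \<le> b1 * Os"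
  proof -
    interpret prob_space ?q by (rule pq)
    have P1: "measure ?q (space (torus (UNIV - set is))) = 1" using prob_space by simp
    have "integral\<^sup>L ?q (gfun x) \<le> integral\<^sup>L ?q (\<lambda>u. gfun xp u + b1 * Os)"
      by (rule integral_mono[OF ig[OF xTs]]) (use ig[OF xpT] in \<open>auto simp: UH dest!: K7a\<close>)
    also have "\<dots> = integral\<^sup>L ?q (gfun xp) + b1 * Os"
      using ig[OF xpT] by (simp add: P1)
    finally show ?thesis by simp
  qed
  have e: "(x(m := s))(is ! j := t) = xp(m := s)" using cm by (auto simp: xp_def cj_def)
  have second: "integral\<^sup>L ?q (gfun xp) - integral\<^sup>L (cond_meas \<rho> (set is) (xp(m := s))) (gfun xp) \<le> bk k * (b1 * Os)"
  proof -
    have "integral\<^sup>L ?q (gfun xp) - integral\<^sup>L (cond_meas \<rho> (set is) ((x(m := s))(is ! j := t))) (gfun xp) \<le> bk k * (b1 * Os)"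
    proof (rule Bk_scale[OF len dist _ gq tT kN])
      show "j < k" using jk by simp
      show "integrable (torus (UNIV - set is)) (gfun xp)" unfolding UH by (rule g_int[OF xpT])
      show "0 \<le> b1 * Os" using b1_nn Os_nn by simp
      fix l y s' assume "l \<in> UNIV - set is" "y \<in> space (torus (UNIV - set is))" "s' \<in> Tset"
      then show "\<bar>gfun xp y - gfun xp (y(l := s'))\<bar> \<le> b1 * Os" using K7b[OF xpT] UH by simp
    qed
    then show ?thesis unfolding e .
  qed
  have "Gfun x s - Gfun xp s = (integral\<^sup>L ?q (gfun x) - integral\<^sup>L ?q (gfun xp))
      + (integral\<^sup>L ?q (gfun xp) - integral\<^sup>L (cond_meas \<rho> (set is) (xp(m := s))) (gfun xp))"
    by (simp add: Gfun_def)
  also have "\<dots> \<le> b1 * Os + bk k * (b1 * Os)" using first second by linarith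
  finally show ?thesis by (simp add: algebra_simps)
qed

lemma K8d:
  assumes s: "s \<in> Tset" and s': "s' \<in> Tset"
  shows "Gfun x s - Gfun x s' \<le> bk k * (b1 * Os)"
proof -
  have gq: "\<forall>i\<in>set is. (x(m := s)) i \<in> Tset" using xTs s set_is by auto
  have UH: "UNIV - set is = H" by (simp add: H_def)
  have e: "(x(m := s))(is ! (k - 1) := s') = x(m := s')" by (simp add: m_def)
  have "integral\<^sup>L (cond_meas \<rho> (set is) (x(m := s))) (gfun x)
     - integral\<^sup>L (cond_meas \<rho> (set is) ((x(m := s))(is ! (k - 1) := s'))) (gfun x) \<le> bk k * (b1 * Os)"
  proof (rule Bk_scale[OF len dist _ gq s' kN])
    show "k - 1 < k" using k2 by simp
    show "integrable (torus (UNIV - set is)) (gfun x)" unfolding UH by (rule g_int[OF xTs])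
    show "0 \<le> b1 * Os" using b1_nn Os_nn by simp
    fix l y s'' assume "l \<in> UNIV - set is" "y \<in> space (torus (UNIV - set is))" "s'' \<in> Tset"
    then show "\<bar>gfun x y - gfun x (y(l := s''))\<bar> \<le> b1 * Os" using K7b[OF xTs] UH by simp
  qed
  then show ?thesis unfolding e by (simp add: Gfun_def)
qed

lemma main_bound:
  "integral\<^sup>L (marginal m (cond_meas \<rho> F x)) \<psi> - integral\<^sup>L (marginal m (cond_meas \<rho> F xp)) \<psi>
     \<le> b1 * (1 + 2 * bk k) * Os"
proof -
  have pm: "(\<lambda>y. y m) \<in> measurable (cond_meas \<rho> F w) Tm" for w
    using comp_m by (simp cong: measurable_cong_sets)
  have pp: "prob_space (marginal m (cond_meas \<rho> F w))" if "\<forall>i\<in>F. w i \<in> Tset" for w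
    unfolding marginal_def by (rule prob_space.prob_space_distr[OF prob_cond[OF that] pm])
  have sp: "space (marginal m (cond_meas \<rho> F w)) = Tset" for w by (simp add: marginal_def)
  have mG: "Gfun w \<in> borel_measurable (marginal m (cond_meas \<rho> F w'))" if "\<forall>i\<in>F. w i \<in> Tset" for w w'
    using G_meas[OF that] by (simp add: marginal_def cong: measurable_cong_sets)
  have iG: "integrable (marginal m (cond_meas \<rho> F w')) (Gfun w)" if "\<forall>i\<in>F. w i \<in> Tset" "\<forall>i\<in>F. w' i \<in> Tset" for w w'
    by (rule int_bnd[OF pp[OF that(2)] mG[OF that(1)]]) (use G_bnd[OF that(1)] sp in auto)
  let ?px = "marginal m (cond_meas \<rho> F x)" and ?pp = "marginal m (cond_meas \<rho> F xp)"
  have d1: "integral\<^sup>L ?px (Gfun x) - integral\<^sup>L ?pp (Gfun x) \<le> bk k * (b1 * Os)"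
    by (rule diff_le[OF pp[OF xTs] pp[OF xpT]]) (use mG[OF xTs] sp K8d in auto)
  have d2: "integral\<^sup>L ?pp (Gfun x) - integral\<^sup>L ?pp (Gfun xp) \<le> b1 * Os * (1 + bk k)"
  proof -
    interpret prob_space ?pp by (rule pp[OF xpT])
    have "integral\<^sup>L ?pp (Gfun x) \<le> integral\<^sup>L ?pp (\<lambda>s. Gfun xp s + b1 * Os * (1 + bk k))"
      by (rule integral_mono[OF iG[OF xTs xpT]]) (use iG[OF xpT xpT] in \<open>auto simp: sp dest!: K8c\<close>)
    also have "\<dots> = integral\<^sup>L ?pp (Gfun xp) + b1 * Os * (1 + bk k)"
      using iG[OF xpT xpT] by (simp add: prob_space)
    finally show ?thesis by simp
  qed
  have "integral\<^sup>L ?px \<psi> - integral\<^sup>L ?pp \<psi> = integral\<^sup>L ?px (Gfun x) - integral\<^sup>L ?pp (Gfun xp)"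
    using psi_G[OF xTs] psi_G[OF xpT] by simp
  also have "\<dots> \<le> bk k * (b1 * Os) + b1 * Os * (1 + bk k)" using d1 d2 by linarith
  finally show ?thesis by (simp add: algebra_simps)
qed

end


theorem lemma5p4:
  fixes \<mu> :: "('n::finite \<Rightarrow> real) measure" and \<rho> :: "real^'n \<Rightarrow> real"
    and a b K :: real and k j :: nat and "is" :: "'n list"
    and x :: "'n \<Rightarrow> real" and t :: real and \<psi> :: "real \<Rightarrow> real"
  assumes "in_M a b (K / real CARD('n)) \<mu> \<rho>" and "prob_space \<mu>"
    and "1 \<le> k" and "k \<le> CARD('n)"
    and "length is = k" and "distinct is"
    and "j < k - 1"
    and "\<forall>i\<in>set (take (k - 1) is). x i \<in> Tset" and "t \<in> Tset"
    and "Osc1 \<psi> < \<infinity>"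
  shows "ereal (integral\<^sup>L (marginal (is ! (k - 1)) (cond_meas \<rho> (set (take (k - 1) is)) x)) \<psi>
              - integral\<^sup>L (marginal (is ! (k - 1))
                   (cond_meas \<rho> (set (take (k - 1) is)) (x(is ! j := t)))) \<psi>)
         \<le> Bk \<rho> (CARD('n) - 1) * (1 + 2 * Bk \<rho> k) * Osc1 \<psi>"
proof -
  from assms(1) have C2: "C2_vec \<rho>" and pos: "\<And>x. \<rho> x > 0" by (auto simp: in_M_def)
  from C2 obtain D1 :: "real^'n \<Rightarrow> ((real^'n) \<Rightarrow>\<^sub>L real)" where
    D1: "\<And>x. (\<rho> has_derivative blinfun_apply (D1 x)) (at x)" unfolding C2_vec_def by blast
  have cont: "continuous_on UNIV \<rho>"
    by (intro continuous_at_imp_continuous_on ballI has_derivative_continuous[OF D1])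
  interpret dens \<rho> by (unfold_locales) (auto intro: cont pos)
  have k2: "2 \<le> k" using assms(7) by simp
  have T0: "(0::real) \<in> Tset" by (simp add: Tset_def)
  have Onn: "0 \<le> Osc1 \<psi>" unfolding Osc1_def
    by (rule SUP_upper2[of "(0, 0)"]) (use T0 in auto)
  obtain Os where Os: "Osc1 \<psi> = ereal Os" "0 \<le> Os"
    using Onn assms(10) by (cases "Osc1 \<psi>") auto
  have Oosc: "\<bar>\<psi> s - \<psi> s'\<bar> \<le> Os" if "s \<in> Tset" "s' \<in> Tset" for s s'
  proof -
    have "ereal \<bar>\<psi> s - \<psi> s'\<bar> \<le> Osc1 \<psi>" unfolding Osc1_def
      by (rule SUP_upper2[of "(s, s')"]) (use that in auto)
    then show ?thesis using Os by simp
  qed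
  obtain b1 where b1: "Bk \<rho> (CARD('n) - 1) = ereal b1" "0 \<le> b1"
    using Bk_eq[of "CARD('n) - 1"] k2 assms(4) by auto
  obtain bk where bk: "Bk \<rho> k = ereal bk" "0 \<le> bk"
    using Bk_eq[of k] k2 assms(4) by auto
  have RHS: "Bk \<rho> (CARD('n) - 1) * (1 + 2 * Bk \<rho> k) * Osc1 \<psi> = ereal (b1 * (1 + 2 * bk) * Os)"
    unfolding b1(1) bk(1) Os(1) by simp
  show ?thesis
  proof (cases "\<psi> \<in> borel_measurable Tm")
    case True
    interpret mainloc \<rho> k j "is" x t \<psi> Os
      by unfold_locales (use assms True Oosc in auto)
    have "b1 = mainloc.b1 \<rho>" using b1 by (simp add: b1_def bk_def)
    have e1: "mainloc.b1 \<rho> = b1" using b1 by (simp add: b1_def bk_def)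
    have e2: "dens.bk \<rho> k = bk" using bk by (simp add: bk_def)
    show ?thesis
      using main_bound unfolding RHS e1 e2 by (simp add: F_def m_def xp_def cj_def)
  next
    case False
    have z: "integral\<^sup>L (marginal (is ! (k - 1)) (cond_meas \<rho> (set (take (k - 1) is)) w)) \<psi> = 0" for w
    proof (rule not_integrable_integral_eq)
      show "\<not> integrable (marginal (is ! (k - 1)) (cond_meas \<rho> (set (take (k - 1) is)) w)) \<psi>"
        using False by (auto simp: marginal_def cong: measurable_cong_sets)
    qed
    show ?thesis unfolding RHS z using b1 bk Os by simp
  qed
qed


end
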